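(* Consider an insertion-only edge stream, an integer $M\ge 6$, and the reservoir sample $\mathcal{S}$ of capacity $M$ (as described in the context). For a time $t$ let $\tau^{(t)}$ be the number of triangles of $G^{(t)}$ all of whose edges lie in $\mathcal{S}$ at the end of time step $t$, and let $\phi^{(t)}=\frac{t(t-1)(t-2)}{M(M-1)(M-2)}\tau^{(t)}$ and $\phi_{\mathrm{mix}}^{(t)}=\left(\frac{t}{M}\right)^3\tau^{(t)}$. Then for any $t>M$, \[ \left|\phi^{(t)}-\phi_{\mathrm{mix}}^{(t)}\right|\le\phi_{\mathrm{mix}}^{(t)}\frac{4}{M-2}. \]
   Context: An insertion-only edge stream: at each time step $s=1,2,\dots$ an edge $e_s$ between two distinct vertices arrives, which is not already present; $G^{(t)}$ has edge set $\{e_1,\dots,e_t\}$. A triangle is a set of three edges $\{\{u,v\},\{v,w\},\{w,u\}\}$ with $u,v,w$ distinct. Reservoir sampling with capacity $M$: the sample starts empty; at time $s$, if $s\le M$ the edge $e_s$ is inserted; if $s>M$, with probability $M/s$ an edge chosen uniformly at random from the sample is removed and $e_s$ is inserted, otherwise the sample is unchanged. *)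

theory Defs
  imports "HOL-Probability.Probability_Mass_Function"
begin

text \<open>An edge is a 2-element vertex set; the stream is e 1, e 2, ... (e 0 unused).\<close>

definition graph_at :: "(nat \<Rightarrow> 'a set) \<Rightarrow> nat \<Rightarrow> 'a set set" where
  "graph_at e t = e ` {1..t}"

definition triangles :: "'a set set \<Rightarrow> 'a set set set" where
  "triangles E = {T. \<exists>u v w. distinct [u, v, w] \<and> T = {{u, v}, {v, w}, {w, u}} \<and> T \<subseteq> E}"

fun reservoir :: "(nat \<Rightarrow> 'a set) \<Rightarrow> nat \<Rightarrow> nat \<Rightarrow> 'a set set pmf" where
  "reservoir e M 0 = return_pmf {}"
| "reservoir e M (Suc s) =
     bind_pmf (reservoir e M s) (\<lambda>S.
       if Suc s \<le> M then return_pmf (insert (e (Suc s)) S)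
       else bind_pmf (bernoulli_pmf (real M / real (Suc s))) (\<lambda>b.
         if b then bind_pmf (pmf_of_set S) (\<lambda>x. return_pmf (insert (e (Suc s)) (S - {x})))
         else return_pmf S))"

definition tau :: "(nat \<Rightarrow> 'a set) \<Rightarrow> nat \<Rightarrow> 'a set set \<Rightarrow> nat" where
  "tau e t S = card {T \<in> triangles (graph_at e t). T \<subseteq> S}"

definition phi :: "nat \<Rightarrow> nat \<Rightarrow> nat \<Rightarrow> real" where
  "phi M t k = (real t * (real t - 1) * (real t - 2)) / (real M * (real M - 1) * (real M - 2)) * real k"

definition phi_mix :: "nat \<Rightarrow> nat \<Rightarrow> nat \<Rightarrow> real" where
  "phi_mix M t k = (real t / real M) ^ 3 * real k"

end

theory Submission
  imports Defs
begin

lemma l1: fixes a m :: real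
  shows "(a-1)*(a-2)*m^2 - a^2*(m-1)*(m-2) = (a-m)*(3*a*m - 2*(a+m))"
  by (simp add: algebra_simps power2_eq_square)

lemma l2: fixes a m :: real assumes "m \<ge> 6" "a > m"
  shows "(a-1)*(a-2)*m^2 \<le> a^2*(m-1)*(m+2)"
proof -
  have "(a-1)*(a-2) \<le> a^2" using assms by (simp add: algebra_simps power2_eq_square)
  moreover have "m^2 \<le> (m-1)*(m+2)" using assms by (simp add: algebra_simps power2_eq_square)
  ultimately show ?thesis using assms by (smt (verit) mult_mono mult_nonneg_nonneg zero_le_power2 mult.assoc)
qed

lemma main: fixes a m k :: real assumes m: "m \<ge> 6" and a: "a > m" and k: "k \<ge> 0"
  shows "\<bar>(a*(a-1)*(a-2))/(m*(m-1)*(m-2)) * k - (a/m)^3 * k\<bar> \<le> (a/m)^3 * k * (4/(m-2))"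
proof -
  define R where "R = (a-1)*(a-2)*m^2/(a^2*(m-1)*(m-2))"
  have eq: "(a*(a-1)*(a-2))/(m*(m-1)*(m-2)) = (a/m)^3 * R"
  proof -
    have "m - 1 \<noteq> 0" "m - 2 \<noteq> 0" "m \<noteq> 0" "a \<noteq> 0" using m a by auto
    hence d1: "m*(m-1)*(m-2) \<noteq> 0" and d2: "m^3*(a^2*(m-1)*(m-2)) \<noteq> 0" by auto
    have "(a/m)^3 * R = (a^3*((a-1)*(a-2)*m^2)) / (m^3*(a^2*(m-1)*(m-2)))"
      unfolding R_def power_divide times_divide_times_eq ..
    also have "\<dots> = (a*(a-1)*(a-2))/(m*(m-1)*(m-2))"
      by (subst frac_eq_eq[OF d2 d1]) (simp add: power2_eq_square power3_eq_cube algebra_simps)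
    finally show ?thesis by simp
  qed
  have p: "(a-m)*(3*a*m - 2*(a+m)) \<ge> 0"
  proof -
    have "3*a*m - 2*(a+m) \<ge> 0"
    proof -
      have "a*m \<ge> 6*a" using m a mult_left_mono[of 6 m a] by (simp add: mult.commute)
      moreover have "a*m \<ge> 6*m" using m a by (simp add: mult_right_mono)
      ultimately have "2*a + 2*m \<le> 3*(a*m)" using m a by linarith
      thus ?thesis by (simp add: mult.assoc)
    qed
    thus ?thesis using a by simp
  qed
  have den: "a^2*(m-1)*(m-2) > 0" using m a by simp
  have R1: "R \<ge> 1" unfolding R_def using l1[of a m] p den by (simp add: divide_simps)
  have R2: "R \<le> 1 + 4/(m-2)"
  proof -
    have "R \<le> (m+2)/(m-2)" unfolding R_def using l2[OF m a] den m a
      by (simp add: divide_simps) (simp add: mult_ac)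
    also have "(m+2)/(m-2) = 1 + 4/(m-2)" using m by (simp add: field_simps)
    finally show ?thesis .
  qed
  have c: "(a/m)^3 * k \<ge> 0" using m a k by simp
  have "(a*(a-1)*(a-2))/(m*(m-1)*(m-2)) * k - (a/m)^3 * k = (a/m)^3 * k * (R - 1)"
    unfolding eq by (simp only: left_diff_distrib right_diff_distrib mult_1_left mult_1_right mult_ac)
  moreover have "(a/m)^3 * k * (R - 1) \<ge> 0" using c R1 by simp
  moreover have "(a/m)^3 * k * (R - 1) \<le> (a/m)^3 * k * (4/(m-2))"
    using c R2 by (intro mult_left_mono) auto
  ultimately show ?thesis by simp
qed

theorem lemma4p10:
  fixes e :: "nat \<Rightarrow> 'a set" and M t :: nat and S :: "'a set set"
  assumes edges: "\<forall>s\<ge>1. card (e s) = 2"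
    and new: "\<forall>r s. 1 \<le> r \<and> r < s \<longrightarrow> e r \<noteq> e s"
    and M: "M \<ge> 6"
    and t: "t > M"
    and S: "S \<in> set_pmf (reservoir e M t)"
  shows "\<bar>phi M t (tau e t S) - phi_mix M t (tau e t S)\<bar>
           \<le> phi_mix M t (tau e t S) * (4 / (real M - 2))"
  unfolding phi_def phi_mix_def
  by (rule main) (use M t in auto)

end
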